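(* Let $S : \mathbf{FinGraph}^s_\star \to \mathbf{FinArb}^<_\star$ be the least-shortest-path-tree functor and $I : \mathbf{FinArb}^<_\star \to \mathbf{FinGraph}^s_\star$ the inclusion functor (both defined below). Then $I$ is left adjoint to $S$, i.e. $I \dashv S$.
   Context: A (directed) graph is a pair $(V,\to)$ with $\to\subseteq V\times V$; $N(u)$ denotes the set of outgoing edges of $u$. A pointed graph has a distinguished vertex $v_0$; it is connected if every vertex is reachable by a path from $v_0$. A path is a finite sequence $v_1\to\cdots\to v_n$ of vertices joined by edges, of length $|\pi|$; co-initial paths share their source; $\pi\sqsubset\sigma$ means $\pi$ is a proper prefix of $\sigma$. A finite edge-ordered graph is a finite graph with a strict linear order $\triangleleft$ on each neighborhood. Lexicographic path order on co-initial paths: if $\pi\sqsubset\sigma$ then $\pi\prec\sigma$ (symmetrically if $\sigma\sqsubset\pi$); otherwise, with $\zeta$ the longest common prefix, $u$ its target and $v_1,v_2$ the next vertices in $\pi,\sigma$, $\pi\prec\sigma$ iff $u\to v_1\triangleleft u\to v_2$. Shortlex order: $\pi\prec^s\sigma$ iff $|\pi|<|\sigma|$, or $|\pi|=|\sigma|$ and $\pi\prec\sigma$. $\min^s(u\rightsquigarrow v)$ is the lexicographically least shortest path from $u$ to $v$ (the $\prec^s$-least path). For a vertex map $h$, $h(v_1\to\cdots\to v_n)=h(v_1)\to\cdots\to h(v_n)$. A homomorphism of finite pointed edge-ordered graphs $h:G\to H$ is a vertex map with (i) $u\to v$ implies $h(u)\to h(v)$; (ii) the distinguished vertex of $G$ is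 the unique vertex mapped to the distinguished vertex of $H$; (iii) $u\to v_1\triangleleft u\to v_2$ implies $h(u)\to h(v_1)\triangleleft h(u)\to h(v_2)$. A short-lex homomorphism additionally satisfies $h(\min^s(u\rightsquigarrow v))=\min^s(h(u)\rightsquigarrow h(v))$. An arborescence is a pointed graph in which for every vertex $u$ there is a unique path $v_0\rightsquigarrow u$. $\mathbf{FinGraph}^s_\star$ is the category of connected, finite, pointed, edge-ordered graphs with short-lex homomorphisms; $\mathbf{FinArb}^<_\star$ is the category of finite edge-ordered arborescences with homomorphisms of pointed edge-ordered graphs (these are automatically short-lex homomorphisms, so the inclusion $I$, identity on objects and morphisms, is a functor). The functor $S$: $S(G)$ has the vertices and distinguished vertex of $G$, contains an edge $u\to v$ iff $u\to v$ is an edge of $\min^s(v_0\rightsquigarrow v)$ in $G$, and orders co-initial edges as in $G$; $S(h)(v)=h(v)$. *)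

theory Defs
  imports Main
begin

text \<open>A finite pointed edge-ordered graph. Edges form a relation on vertices.
  eord G u v1 v2 means: the edge u->v1 is strictly below the edge u->v2 in the
  order on the neighbourhood N(u).\<close>

record 'v eograph =
  verts :: "'v set"
  edges :: "('v \<times> 'v) set"
  root  :: 'v
  eord  :: "'v \<Rightarrow> 'v \<Rightarrow> 'v \<Rightarrow> bool"

definition nbhd :: "('v, 'm) eograph_scheme \<Rightarrow> 'v \<Rightarrow> 'v set" where
  "nbhd G u = {v. (u, v) \<in> edges G}"

definition wf_eograph :: "('v, 'm) eograph_scheme \<Rightarrow> bool" where
  "wf_eograph G \<longleftrightarrow>
     finite (verts G) \<and> edges G \<subseteq> verts G \<times> verts G \<and> root G \<in> verts G \<and>
     (\<forall>u v1 v2. eord G u v1 v2 \<longrightarrow> u \<in> verts G \<and> v1 \<in> nbhd G u \<and> v2 \<in> nbhd G u) \<and>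
     (\<forall>u \<in> verts G.
        (\<forall>v. \<not> eord G u v v) \<and>
        (\<forall>a b c. eord G u a b \<longrightarrow> eord G u b c \<longrightarrow> eord G u a c) \<and>
        (\<forall>a \<in> nbhd G u. \<forall>b \<in> nbhd G u. a \<noteq> b \<longrightarrow> eord G u a b \<or> eord G u b a))"

definition is_path :: "('v, 'm) eograph_scheme \<Rightarrow> 'v list \<Rightarrow> bool" where
  "is_path G xs \<longleftrightarrow> xs \<noteq> [] \<and> set xs \<subseteq> verts G \<and>
     (\<forall>i. Suc i < length xs \<longrightarrow> (xs ! i, xs ! Suc i) \<in> edges G)"

definition path_from_to :: "('v, 'm) eograph_scheme \<Rightarrow> 'v \<Rightarrow> 'v \<Rightarrow> 'v list \<Rightarrow> bool" where
  "path_from_to G u v xs \<longleftrightarrow> is_path G xs \<and> hd xs = u \<and> last xs = v"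

definition reachable :: "('v, 'm) eograph_scheme \<Rightarrow> 'v \<Rightarrow> 'v \<Rightarrow> bool" where
  "reachable G u v \<longleftrightarrow> (\<exists>xs. path_from_to G u v xs)"

definition connected_graph :: "('v, 'm) eograph_scheme \<Rightarrow> bool" where
  "connected_graph G \<longleftrightarrow> (\<forall>v \<in> verts G. reachable G (root G) v)"

definition lex_less :: "('v, 'm) eograph_scheme \<Rightarrow> 'v list \<Rightarrow> 'v list \<Rightarrow> bool" where
  "lex_less G p q \<longleftrightarrow>
     (\<exists>r. r \<noteq> [] \<and> q = p @ r) \<or>
     (\<exists>z a b r1 r2. z \<noteq> [] \<and> a \<noteq> b \<and> p = z @ a # r1 \<and> q = z @ b # r2 \<and> eord G (last z) a b)"

definition shortlex_less :: "('v, 'm) eograph_scheme \<Rightarrow> 'v list \<Rightarrow> 'v list \<Rightarrow> bool" where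
  "shortlex_less G p q \<longleftrightarrow>
     length p < length q \<or> (length p = length q \<and> lex_less G p q)"

definition min_s :: "('v, 'm) eograph_scheme \<Rightarrow> 'v \<Rightarrow> 'v \<Rightarrow> 'v list" where
  "min_s G u v = (THE p. path_from_to G u v p \<and>
       (\<forall>q. path_from_to G u v q \<longrightarrow> q \<noteq> p \<longrightarrow> shortlex_less G p q))"

definition graph_hom :: "('v, 'm) eograph_scheme \<Rightarrow> ('w, 'n) eograph_scheme \<Rightarrow> ('v \<Rightarrow> 'w) \<Rightarrow> bool" where
  "graph_hom G H h \<longleftrightarrow>
     (\<forall>u \<in> verts G. h u \<in> verts H) \<and>
     (\<forall>u v. (u, v) \<in> edges G \<longrightarrow> (h u, h v) \<in> edges H) \<and>
     (\<forall>u \<in> verts G. h u = root H \<longleftrightarrow> u = root G) \<and>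
     (\<forall>u v1 v2. eord G u v1 v2 \<longrightarrow> eord H (h u) (h v1) (h v2))"

definition shortlex_hom :: "('v, 'm) eograph_scheme \<Rightarrow> ('w, 'n) eograph_scheme \<Rightarrow> ('v \<Rightarrow> 'w) \<Rightarrow> bool" where
  "shortlex_hom G H h \<longleftrightarrow> graph_hom G H h \<and>
     (\<forall>u \<in> verts G. \<forall>v \<in> verts G. reachable G u v \<longrightarrow>
        map h (min_s G u v) = min_s H (h u) (h v))"

definition arborescence :: "('v, 'm) eograph_scheme \<Rightarrow> bool" where
  "arborescence G \<longleftrightarrow> (\<forall>u \<in> verts G. \<exists>!xs. path_from_to G (root G) u xs)"

definition fingraph_obj :: "('v, 'm) eograph_scheme \<Rightarrow> bool" where
  "fingraph_obj G \<longleftrightarrow> wf_eograph G \<and> connected_graph G"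

definition finarb_obj :: "('v, 'm) eograph_scheme \<Rightarrow> bool" where
  "finarb_obj G \<longleftrightarrow> wf_eograph G \<and> arborescence G"

text \<open>The least-shortest-path-tree functor S on objects (on morphisms S(h) = h).\<close>

definition S_edges :: "('v, 'm) eograph_scheme \<Rightarrow> ('v \<times> 'v) set" where
  "S_edges G = {(u, v). v \<in> verts G \<and>
     (\<exists>i. Suc i < length (min_s G (root G) v) \<and>
          min_s G (root G) v ! i = u \<and> min_s G (root G) v ! Suc i = v)}"

definition S_obj :: "('v, 'm) eograph_scheme \<Rightarrow> 'v eograph" where
  "S_obj G = \<lparr> verts = verts G, edges = S_edges G, root = root G,
     eord = (\<lambda>u a b. eord G u a b \<and> (u, a) \<in> S_edges G \<and> (u, b) \<in> S_edges G) \<rparr>"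

end

theory Submission imports Defs begin

fun ipath :: "('v, 'm) eograph_scheme \<Rightarrow> 'v list \<Rightarrow> bool" where
  "ipath G [] = False"
| "ipath G [x] = (x \<in> verts G)"
| "ipath G (x # y # xs) = (x \<in> verts G \<and> (x, y) \<in> edges G \<and> ipath G (y # xs))"

lemma is_path_ipath: "is_path G xs = ipath G xs"
proof (induction xs rule: ipath.induct)
  case (1 G) then show ?case by (simp add: is_path_def)
next
  case (2 G x) then show ?case by (simp add: is_path_def)
next
  case (3 G x y xs)
  have "is_path G (x # y # xs) \<longleftrightarrow> x \<in> verts G \<and> (x, y) \<in> edges G \<and> is_path G (y # xs)"
    unfolding is_path_def
  proof safe
    fix i assume "\<forall>i. Suc i < length (x # y # xs) \<longrightarrow> ((x # y # xs) ! i, (x # y # xs) ! Suc i) \<in> edges G"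
      "Suc i < length (y # xs)"
    then show "((y # xs) ! i, (y # xs) ! Suc i) \<in> edges G"
      by (metis Suc_less_eq length_Cons nth_Cons_Suc)
  next
    fix i assume "(x, y) \<in> edges G" "\<forall>i. Suc i < length (y # xs) \<longrightarrow> ((y # xs) ! i, (y # xs) ! Suc i) \<in> edges G"
      "Suc i < length (x # y # xs)"
    then show "((x # y # xs) ! i, (x # y # xs) ! Suc i) \<in> edges G"
      by (cases i) auto
  qed auto
  then show ?case using 3 by simp
qed

lemma ipath_append:
  "xs \<noteq> [] \<Longrightarrow> ys \<noteq> [] \<Longrightarrow> ipath G (xs @ ys) \<longleftrightarrow> ipath G xs \<and> ipath G ys \<and> (last xs, hd ys) \<in> edges G"
proof (induction xs rule: ipath.induct)
  case (2 G x) then show ?case by (cases ys) auto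
qed auto

lemma ipath_nonempty: "ipath G xs \<Longrightarrow> xs \<noteq> []" by auto

lemma ipath_set: "ipath G xs \<Longrightarrow> set xs \<subseteq> verts G"
  by (induction G xs rule: ipath.induct) auto

lemma ipath_nth: "ipath G xs \<Longrightarrow> Suc i < length xs \<Longrightarrow> (xs ! i, xs ! Suc i) \<in> edges G"
  by (metis is_path_def is_path_ipath)

lemma ipath_take: "ipath G xs \<Longrightarrow> 0 < k \<Longrightarrow> ipath G (take k xs)"
  by (metis append_take_drop_id ipath_append take_eq_Nil neq0_conv ipath_nonempty drop_eq_Nil2 linorder_not_le append_Nil2 )

lemma ipath_glue:
  assumes "ipath G P" "ipath G q" "last P = hd q"
  shows "ipath G (P @ tl q)"
proof (cases "tl q = []")
  case True then show ?thesis using assms by simp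
next
  case False
  have q: "q = hd q # tl q" using assms ipath_nonempty by (metis list.collapse)
  have "ipath G (tl q)" and "(hd q, hd (tl q)) \<in> edges G" using assms(2) False
    by (metis q ipath.simps(3) list.collapse)+
  then show ?thesis using assms False ipath_nonempty ipath_append by metis
qed


definition dv :: "('v, 'm) eograph_scheme \<Rightarrow> 'v list \<Rightarrow> 'v list \<Rightarrow> bool" where
  "dv G p q \<longleftrightarrow> (\<exists>z a b r1 r2. z \<noteq> [] \<and> a \<noteq> b \<and> p = z @ a # r1 \<and> q = z @ b # r2 \<and> eord G (last z) a b)"

definition dvk :: "('v, 'm) eograph_scheme \<Rightarrow> 'v list \<Rightarrow> 'v list \<Rightarrow> nat \<Rightarrow> bool" where
  "dvk G p q k \<longleftrightarrow> 0 < k \<and> k < length p \<and> k < length q \<and> take k p = take k q \<and> p ! k \<noteq> q ! k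
     \<and> eord G (p ! (k - 1)) (p ! k) (q ! k)"

lemma dv_dvk: "dv G p q \<longleftrightarrow> (\<exists>k. dvk G p q k)"
proof
  assume "dv G p q"
  then obtain z a b r1 r2 where h: "z \<noteq> []" "a \<noteq> b" "p = z @ a # r1" "q = z @ b # r2" "eord G (last z) a b"
    unfolding dv_def by blast
  have "dvk G p q (length z)" unfolding dvk_def using h
    by (auto simp: nth_append last_conv_nth)
  then show "\<exists>k. dvk G p q k" by blast
next
  assume "\<exists>k. dvk G p q k"
  then obtain k where k: "dvk G p q k" by blast
  define z where "z = take k p"
  have p: "p = z @ p ! k # drop (Suc k) p" using k unfolding dvk_def z_def
    by (metis id_take_nth_drop)
  have q: "q = z @ q ! k # drop (Suc k) q" using k unfolding dvk_def z_def
    by (metis id_take_nth_drop)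
  have k0: "0 < k" "k < length p" using k unfolding dvk_def by auto
  have "z \<noteq> []" using k0 unfolding z_def by auto
  moreover have "last z = p ! (k - 1)"
  proof -
    have "take k p \<noteq> []" using k0 by auto
    then have "last (take k p) = take k p ! (k - 1)" using k0 by (simp add: last_conv_nth min_def)
    then show ?thesis using k0 by (simp add: z_def)
  qed
  moreover have "p ! k \<noteq> q ! k" "eord G (p ! (k - 1)) (p ! k) (q ! k)" using k unfolding dvk_def by auto
  ultimately have "z \<noteq> [] \<and> p ! k \<noteq> q ! k \<and> p = z @ p ! k # drop (Suc k) p \<and> q = z @ q ! k # drop (Suc k) q
     \<and> eord G (last z) (p ! k) (q ! k)" using p q by metis
  then show "dv G p q" unfolding dv_def by blast
qed

lemma take_eq_nth: "take k p = take k q \<Longrightarrow> j < k \<Longrightarrow> j < length p \<Longrightarrow> j < length q \<Longrightarrow> p ! j = q ! j"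
  by (metis nth_take)

lemma dvk_le: "dvk G p q k \<Longrightarrow> take j p = take j q \<Longrightarrow> j \<le> k"
  unfolding dvk_def by (metis leI take_eq_nth)

lemma wf_irr: "wf_eograph G \<Longrightarrow> \<not> eord G u a a"
  unfolding wf_eograph_def by blast

lemma wf_trans: "wf_eograph G \<Longrightarrow> eord G u a b \<Longrightarrow> eord G u b c \<Longrightarrow> eord G u a c"
  unfolding wf_eograph_def by blast

lemma wf_total: "wf_eograph G \<Longrightarrow> u \<in> verts G \<Longrightarrow> (u, a) \<in> edges G \<Longrightarrow> (u, b) \<in> edges G \<Longrightarrow> a \<noteq> b
  \<Longrightarrow> eord G u a b \<or> eord G u b a"
  unfolding wf_eograph_def nbhd_def by blast

lemma wf_eord: "wf_eograph G \<Longrightarrow> eord G u a b \<Longrightarrow> u \<in> verts G \<and> (u, a) \<in> edges G \<and> (u, b) \<in> edges G"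
  unfolding wf_eograph_def nbhd_def by blast

lemma dv_irrefl: "\<not> dv G p p"
  unfolding dv_dvk dvk_def by auto

lemma dv_asym: assumes "wf_eograph G" "dv G p q" "dv G q p" shows False
proof -
  obtain k k' where k: "dvk G p q k" and k': "dvk G q p k'" using assms dv_dvk by metis
  have "take k' p = take k' q" using k' unfolding dvk_def by simp
  then have "k' \<le> k" using dvk_le[OF k] by simp
  moreover have "take k q = take k p" using k unfolding dvk_def by simp
  then have "k \<le> k'" using dvk_le[OF k'] by simp
  ultimately have "k = k'" by simp
  moreover have "q ! (k - 1) = p ! (k - 1)" using k take_eq_nth[of k p q "k - 1"] unfolding dvk_def
    by force
  ultimately show False using k k' wf_trans[OF assms(1)] wf_irr[OF assms(1)] unfolding dvk_def by metis
qed

lemma dv_trans: assumes "wf_eograph G" "dv G p q" "dv G q r" shows "dv G p r"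
proof -
  obtain k k' where k: "dvk G p q k" and k': "dvk G q r k'" using assms dv_dvk by metis
  have "k < k' \<or> k' < k \<or> k = k'" by arith
  moreover {
    assume "k < k'"
    have tk': "take k' q = take k' r" using k' unfolding dvk_def by simp
    have "take k q = take k r" using arg_cong[OF tk', of "take k"] \<open>k < k'\<close> by (simp add: min_def)
    moreover have "q ! k = r ! k" using k' \<open>k < k'\<close> k take_eq_nth[OF tk', of k] unfolding dvk_def by simp
    ultimately have "dvk G p r k" using k k' \<open>k < k'\<close> unfolding dvk_def by auto
  } moreover {
    assume "k' < k"
    have tk: "take k p = take k q" using k unfolding dvk_def by simp
    have "take k' p = take k' q" using arg_cong[OF tk, of "take k'"] \<open>k' < k\<close> by (simp add: min_def)
    moreover have "p ! k' = q ! k'" using k' \<open>k' < k\<close> k take_eq_nth[OF tk, of k'] unfolding dvk_def by simp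
    moreover have "p ! (k' - 1) = q ! (k' - 1)" using k' \<open>k' < k\<close> k take_eq_nth[OF tk, of "k' - 1"] unfolding dvk_def
      by simp
    ultimately have "dvk G p r k'" using k k' \<open>k' < k\<close> unfolding dvk_def by auto
  } moreover {
    assume "k = k'"
    have "p ! (k - 1) = q ! (k - 1)" using k take_eq_nth[of k p q "k - 1"] unfolding dvk_def
      by force
    then have e: "eord G (p ! (k - 1)) (p ! k) (r ! k)" using k k' \<open>k = k'\<close> wf_trans[OF assms(1)] unfolding dvk_def
      by metis
    then have "p ! k \<noteq> r ! k" using assms(1) wf_irr by metis
    then have "dvk G p r k" using k k' e \<open>k = k'\<close> unfolding dvk_def by auto
  }
  ultimately show ?thesis using dv_dvk by metis
qed

lemma dv_total:
  assumes wf: "wf_eograph G" and p: "ipath G p" and q: "ipath G q" and l: "length p = length q"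
    and h: "hd p = hd q" and ne: "p \<noteq> q"
  shows "dv G p q \<or> dv G q p"
proof -
  have "\<exists>k. k < length p \<and> p ! k \<noteq> q ! k"
  proof (rule ccontr)
    assume "\<not> (\<exists>k. k < length p \<and> p ! k \<noteq> q ! k)"
    then have "p = q" using l by (intro nth_equalityI) auto
    then show False using ne by simp
  qed
  define k where "k = (LEAST k. k < length p \<and> p ! k \<noteq> q ! k)"
  have k1: "k < length p \<and> p ! k \<noteq> q ! k" unfolding k_def
    by (rule LeastI_ex) fact
  have k2: "p ! j = q ! j" if "j < k" for j
  proof -
    have "\<not> (j < length p \<and> p ! j \<noteq> q ! j)" using not_less_Least[of j "\<lambda>k. k < length p \<and> p ! k \<noteq> q ! k"] that
      unfolding k_def by blast
    then show ?thesis using that k1 by simp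
  qed
  have "p \<noteq> []" using p by auto
  moreover have "q \<noteq> []" using q by auto
  ultimately have "p ! 0 = q ! 0" using h by (metis hd_conv_nth)
  then have "k \<noteq> 0" using k1 by (cases "k = 0") auto
  then have k0: "0 < k" by simp
  have tk: "take k p = take k q" using k1 k2 l by (intro nth_equalityI) auto
  have e1: "(p ! (k - 1), p ! k) \<in> edges G" using ipath_nth[OF p, of "k - 1"] k0 k1 by simp
  have e2: "(q ! (k - 1), q ! k) \<in> edges G" using ipath_nth[OF q, of "k - 1"] k0 k1 l by simp
  have same: "p ! (k - 1) = q ! (k - 1)" using k2 k0 by simp
  have uv: "p ! (k - 1) \<in> verts G" using ipath_set[OF p] k1 by (meson less_imp_diff_less nth_mem subsetD)
  have "eord G (p ! (k - 1)) (p ! k) (q ! k) \<or> eord G (p ! (k - 1)) (q ! k) (p ! k)"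
    using wf_total[OF wf uv e1] e2 same k1 by simp
  then show ?thesis
  proof
    assume e: "eord G (p ! (k - 1)) (p ! k) (q ! k)"
    have "dvk G p q k" unfolding dvk_def
      using k0 k1 l tk e by (intro conjI) simp_all
    then show ?thesis using dv_dvk by metis
  next
    assume e: "eord G (p ! (k - 1)) (q ! k) (p ! k)"
    then have e': "eord G (q ! (k - 1)) (q ! k) (p ! k)" using same by simp
    have "dvk G q p k" unfolding dvk_def
      using k0 k1 l tk[symmetric] e' by (intro conjI) (simp_all add: eq_commute)
    then show ?thesis using dv_dvk by metis
  qed
qed


lemma lex_eq_len: "length p = length q \<Longrightarrow> lex_less G p q \<longleftrightarrow> dv G p q"
  unfolding lex_less_def dv_def by auto

lemma sl_alt: "shortlex_less G p q \<longleftrightarrow> length p < length q \<or> (length p = length q \<and> dv G p q)"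
  unfolding shortlex_less_def using lex_eq_len by metis

lemma sl_irrefl: "\<not> shortlex_less G p p"
  unfolding sl_alt by (simp add: dv_irrefl)

lemma sl_asym: "wf_eograph G \<Longrightarrow> shortlex_less G p q \<Longrightarrow> shortlex_less G q p \<Longrightarrow> False"
  unfolding sl_alt using dv_asym by (metis less_asym less_not_refl)

lemma sl_trans: "wf_eograph G \<Longrightarrow> shortlex_less G p q \<Longrightarrow> shortlex_less G q r \<Longrightarrow> shortlex_less G p r"
  unfolding sl_alt using dv_trans by (metis order.strict_trans order.strict_trans1 order.strict_trans2 order_refl)

lemma sl_total: "wf_eograph G \<Longrightarrow> ipath G p \<Longrightarrow> ipath G q \<Longrightarrow> hd p = hd q \<Longrightarrow> p \<noteq> q \<Longrightarrow>
  shortlex_less G p q \<or> shortlex_less G q p"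
  unfolding sl_alt using dv_total by (metis linorder_neqE_nat)

lemma dv_app: "dv G q p \<Longrightarrow> dv G (q @ s) (p @ t)"
  unfolding dv_def by fastforce

lemma sl_app: "shortlex_less G q p \<Longrightarrow> shortlex_less G (q @ s) (p @ s)"
  unfolding sl_alt using dv_app by fastforce

lemma dv_hd: "dv G q p \<Longrightarrow> hd q = hd p"
  unfolding dv_def by auto

lemma dv_pre:
  assumes "dv G q p" "P \<noteq> []" "last P = hd q"
  shows "dv G (P @ tl q) (P @ tl p)"
proof -
  obtain z a b r1 r2 where h: "z \<noteq> []" "a \<noteq> b" "q = z @ a # r1" "p = z @ b # r2" "eord G (last z) a b"
    using assms(1) unfolding dv_def by blast
  have 1: "P @ tl q = (P @ tl z) @ a # r1" using h by (cases z) auto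
  have 2: "P @ tl p = (P @ tl z) @ b # r2" using h by (cases z) auto
  have 3: "last (P @ tl z) = last z"
  proof (cases "tl z = []")
    case True
    then have "z = [hd z]" using h(1) by (metis list.collapse)
    moreover have "hd q = hd z" using h by simp
    ultimately show ?thesis using True assms(3) by (metis append_Nil2 last.simps)
  next
    case False
    then show ?thesis using h(1) by (metis last_append last_tl)
  qed
  show ?thesis unfolding dv_def using 1 2 3 h assms(2) by (metis append_is_Nil_conv)
qed

lemma sl_pre:
  assumes "shortlex_less G q p" "P \<noteq> []" "last P = hd q" "q \<noteq> []" "p \<noteq> []"
  shows "shortlex_less G (P @ tl q) (P @ tl p)"
  using assms dv_pre[of G q p P] unfolding sl_alt by (cases q; cases p) auto

lemma pft: "path_from_to G u v p \<longleftrightarrow> ipath G p \<and> hd p = u \<and> last p = v"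
  unfolding path_from_to_def is_path_ipath by simp

definition is_min :: "('v, 'm) eograph_scheme \<Rightarrow> 'v \<Rightarrow> 'v \<Rightarrow> 'v list \<Rightarrow> bool" where
  "is_min G u v p \<longleftrightarrow> path_from_to G u v p \<and> (\<forall>q. path_from_to G u v q \<longrightarrow> \<not> shortlex_less G q p)"

lemma finite_minimal:
  assumes "finite F" "F \<noteq> {}" "\<And>x y z. x \<in> F \<Longrightarrow> y \<in> F \<Longrightarrow> z \<in> F \<Longrightarrow> R x y \<Longrightarrow> R y z \<Longrightarrow> R x z"
    "\<And>x. x \<in> F \<Longrightarrow> \<not> R x x"
  shows "\<exists>m \<in> F. \<forall>x \<in> F. \<not> R x m"
  using assms
proof (induction F rule: finite_ne_induct)
  case (singleton x) then show ?case by auto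
next
  case (insert x F)
  then obtain m where m: "m \<in> F" "\<forall>y \<in> F. \<not> R y m" by (metis insert_iff)
  show ?case
  proof (cases "R x m")
    case True
    have "\<forall>y \<in> insert x F. \<not> R y x"
      using True m insert.prems by (metis insert_iff)
    then show ?thesis by blast
  next
    case False then show ?thesis using m by blast
  qed
qed

lemma min_exists:
  assumes wf: "wf_eograph G" and r: "reachable G u v"
  shows "\<exists>p. is_min G u v p"
proof -
  have ex: "\<exists>n p. path_from_to G u v p \<and> length p = n" using r unfolding reachable_def by blast
  define n where "n = (LEAST n. \<exists>p. path_from_to G u v p \<and> length p = n)"
  have n1: "\<exists>p. path_from_to G u v p \<and> length p = n" unfolding n_def using ex by (rule LeastI_ex)
  have n2: "n \<le> length q" if "path_from_to G u v q" for q
    unfolding n_def using that by (metis (mono_tags, lifting) Least_le)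
  define F where "F = {p. path_from_to G u v p \<and> length p = n}"
  have "F \<subseteq> {xs. set xs \<subseteq> verts G \<and> length xs = n}"
    unfolding F_def pft using ipath_set by blast
  moreover have "finite {xs. set xs \<subseteq> verts G \<and> length xs = n}"
    using wf unfolding wf_eograph_def by (simp add: finite_lists_length_eq)
  ultimately have fin: "finite F" by (rule finite_subset)
  have ne: "F \<noteq> {}" using n1 unfolding F_def by blast
  obtain m where m: "m \<in> F" "\<forall>x \<in> F. \<not> shortlex_less G x m"
    using finite_minimal[OF fin ne, of "shortlex_less G"] sl_trans[OF wf] sl_irrefl by metis
  have "is_min G u v m" unfolding is_min_def
  proof (intro conjI allI impI)
    show "path_from_to G u v m" using m unfolding F_def by blast
  next
    fix q assume q: "path_from_to G u v q"
    show "\<not> shortlex_less G q m"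
    proof (cases "length q = n")
      case True then show ?thesis using m q unfolding F_def by blast
    next
      case False
      then have "n < length q" using n2[OF q] by simp
      then show ?thesis using m unfolding F_def sl_alt by auto
    qed
  qed
  then show ?thesis by blast
qed

lemma is_min_less:
  assumes wf: "wf_eograph G" and m: "is_min G u v p" and q: "path_from_to G u v q" and ne: "q \<noteq> p"
  shows "shortlex_less G p q"
  using sl_total[OF wf, of p q] m q ne unfolding is_min_def pft by metis

lemma is_min_min_s:
  assumes wf: "wf_eograph G" and m: "is_min G u v p"
  shows "min_s G u v = p"
  unfolding min_s_def
proof (rule the_equality)
  show "path_from_to G u v p \<and> (\<forall>q. path_from_to G u v q \<longrightarrow> q \<noteq> p \<longrightarrow> shortlex_less G p q)"
    using m is_min_less[OF wf m] unfolding is_min_def by blast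
next
  fix p' assume h: "path_from_to G u v p' \<and> (\<forall>q. path_from_to G u v q \<longrightarrow> q \<noteq> p' \<longrightarrow> shortlex_less G p' q)"
  show "p' = p"
  proof (rule ccontr)
    assume "p' \<noteq> p"
    then have "shortlex_less G p' p" "shortlex_less G p p'" using h m is_min_less[OF wf m] unfolding is_min_def
      by metis+
    then show False using sl_asym[OF wf] by blast
  qed
qed

lemma min_s_is_min:
  assumes wf: "wf_eograph G" and r: "reachable G u v"
  shows "is_min G u v (min_s G u v)"
  using min_exists[OF wf r] is_min_min_s[OF wf] by metis

lemma min_s_iff:
  assumes wf: "wf_eograph G" and r: "reachable G u v"
  shows "min_s G u v = p \<longleftrightarrow> is_min G u v p"
  using min_s_is_min[OF wf r] is_min_min_s[OF wf] by metis


lemma ipath_drop: "ipath G p \<Longrightarrow> k < length p \<Longrightarrow> ipath G (drop k p)"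
proof (cases "k = 0")
  case False
  assume a: "ipath G p" "k < length p"
  have "p = take k p @ drop k p" by simp
  moreover have "take k p \<noteq> []" "drop k p \<noteq> []" using a False by auto
  ultimately show ?thesis using a ipath_append by metis
qed simp

lemma last_glue: "s \<noteq> [] \<Longrightarrow> last P = hd s \<Longrightarrow> P \<noteq> [] \<Longrightarrow> last (P @ tl s) = last s"
  by (cases s) auto

lemma hd_glue: "P \<noteq> [] \<Longrightarrow> hd (P @ tl s) = hd P"
  by simp

lemma is_min_prefix:
  assumes wf: "wf_eograph G" and m: "is_min G u v (p1 @ p2)" and ne: "p1 \<noteq> []"
  shows "is_min G u (last p1) p1"
proof -
  have pp: "ipath G (p1 @ p2)" "hd (p1 @ p2) = u" "last (p1 @ p2) = v" using m unfolding is_min_def pft by auto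
  have p1: "ipath G p1" using pp ne ipath_append by (cases "p2 = []") auto
  have "hd p1 = u" using pp ne by simp
  then have path1: "path_from_to G u (last p1) p1" using p1 unfolding pft by simp
  show ?thesis unfolding is_min_def
  proof (intro conjI allI impI path1)
    fix q assume q: "path_from_to G u (last p1) q"
    show "\<not> shortlex_less G q p1"
    proof
      assume sl: "shortlex_less G q p1"
      have qq: "ipath G q" "hd q = u" "last q = last p1" using q unfolding pft by auto
      have "path_from_to G u v (q @ p2)"
      proof (cases "p2 = []")
        case True then show ?thesis using qq pp by (simp add: pft)
      next
        case False
        then have "ipath G p2" "(last p1, hd p2) \<in> edges G" using pp ne ipath_append by metis+
        then have "ipath G (q @ p2)" using qq False ipath_append ipath_nonempty by metis
        then show ?thesis using qq pp False ipath_nonempty[OF qq(1)] by (simp add: pft)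
      qed
      moreover have "shortlex_less G (q @ p2) (p1 @ p2)" using sl sl_app by metis
      ultimately show False using m unfolding is_min_def by blast
    qed
  qed
qed

lemma is_min_suffix:
  assumes wf: "wf_eograph G" and m: "is_min G u v (P @ tl s)" and ne: "P \<noteq> []" and s: "ipath G s"
    and l: "last P = hd s"
  shows "is_min G (hd s) v s"
proof -
  have pp: "ipath G (P @ tl s)" "hd (P @ tl s) = u" "last (P @ tl s) = v" using m unfolding is_min_def pft by auto
  have sne: "s \<noteq> []" using s by auto
  have "last s = v" using pp last_glue[OF sne l ne] by simp
  then have path1: "path_from_to G (hd s) v s" using s unfolding pft by simp
  show ?thesis unfolding is_min_def
  proof (intro conjI allI impI path1)
    fix q assume q: "path_from_to G (hd s) v q"
    show "\<not> shortlex_less G q s"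
    proof
      assume sl: "shortlex_less G q s"
      have qq: "ipath G q" "hd q = hd s" "last q = v" using q unfolding pft by auto
      have qne: "q \<noteq> []" using qq by auto
      have "ipath G (P @ tl q)" using ipath_glue[of G P q] pp ne qq l ipath_append
        by (metis append_Nil2 tl_Nil ipath_take take_all_iff append_take_drop_id  ipath_drop ipath_nonempty neq0_conv length_greater_0_conv)
      moreover have "hd (P @ tl q) = u" using pp ne by simp
      moreover have "last (P @ tl q) = v" using last_glue[OF qne _ ne] qq l by simp
      ultimately have "path_from_to G u v (P @ tl q)" unfolding pft by simp
      moreover have "shortlex_less G (P @ tl q) (P @ tl s)" using sl_pre[OF sl ne] l qq qne sne by simp
      ultimately show False using m unfolding is_min_def by blast
    qed
  qed
qed


lemma last_take_Suc: "k < length xs \<Longrightarrow> last (take (Suc k) xs) = xs ! k"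
  by (simp add: take_Suc_conv_app_nth)

lemma is_min_distinct:
  assumes wf: "wf_eograph G" and m: "is_min G u v p"
  shows "distinct p"
proof (rule ccontr)
  assume "\<not> distinct p"
  then obtain i j where ij: "i < j" "j < length p" "p ! i = p ! j"
    by (metis distinct_conv_nth linorder_neqE_nat)
  have pp: "ipath G p" "hd p = u" "last p = v" using m unfolding is_min_def pft by auto
  define P where "P = take (Suc i) p"
  define s where "s = drop j p"
  have Pne: "P \<noteq> []" and sne: "s \<noteq> []" using ij unfolding P_def s_def by auto
  have Pp: "ipath G P" unfolding P_def using ipath_take[OF pp(1)] by simp
  have sp: "ipath G s" unfolding s_def using ipath_drop[OF pp(1)] ij by simp
  have lP: "last P = p ! i" unfolding P_def using ij last_take_Suc[of i p]
    by simp
  have hs: "hd s = p ! j" unfolding s_def using ij by (simp add: hd_drop_conv_nth)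
  have l: "last P = hd s" using lP hs ij by simp
  have "ipath G (P @ tl s)" using ipath_glue[OF Pp sp l] .
  moreover have "hd (P @ tl s) = u" using Pne pp ij unfolding P_def
    by (metis hd_append2 hd_take zero_less_Suc)
  moreover have "last (P @ tl s) = v" using last_glue[OF sne l Pne] pp ij unfolding s_def by simp
  ultimately have path: "path_from_to G u v (P @ tl s)" unfolding pft by simp
  have "length (P @ tl s) = Suc i + (length p - j - 1)" unfolding P_def s_def using ij by simp
  then have "length (P @ tl s) < length p" using ij by simp
  then have "shortlex_less G (P @ tl s) p" unfolding sl_alt by simp
  then show False using m path unfolding is_min_def by blast
qed

lemma min_s_root:
  assumes wf: "wf_eograph G" and r: "x \<in> verts G"
  shows "min_s G x x = [x]"
proof (rule is_min_min_s[OF wf])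
  show "is_min G x x [x]" unfolding is_min_def pft
  proof (intro conjI allI impI notI)
    fix q assume q: "ipath G q \<and> hd q = x \<and> last q = x" and sl: "shortlex_less G q [x]"
    then have "length q = 1" unfolding sl_alt by (cases q) auto
    then have "q = [x]" using q by (cases q) auto
    then show False using sl sl_irrefl by metis
  qed (use r in auto)
qed

lemma ms_is_min:
  assumes G: "fingraph_obj G" and v: "v \<in> verts G"
  shows "is_min G (root G) v (min_s G (root G) v)"
  using G v min_s_is_min unfolding fingraph_obj_def connected_graph_def by metis

lemma S_edge_D:
  assumes G: "fingraph_obj G" and e: "(u, v) \<in> S_edges G"
  shows "v \<in> verts G \<and> u \<in> verts G \<and> (u, v) \<in> edges G \<and> min_s G (root G) v = min_s G (root G) u @ [v]"
proof -
  have wf: "wf_eograph G" using G unfolding fingraph_obj_def by simp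
  define m where "m = min_s G (root G) v"
  obtain i where i: "v \<in> verts G" "Suc i < length m" "m ! i = u" "m ! Suc i = v"
    using e unfolding S_edges_def m_def by blast
  have mm: "is_min G (root G) v m" unfolding m_def using ms_is_min[OF G i(1)] .
  have mp: "ipath G m" "last m = v" using mm unfolding is_min_def pft by auto
  have d: "distinct m" using is_min_distinct[OF wf mm] .
  have "last m = m ! (length m - 1)" using i by (subst last_conv_nth) auto
  then have "m ! (length m - 1) = m ! Suc i" using mp i by simp
  then have si: "Suc i = length m - 1" using nth_eq_iff_index_eq[OF d, of "length m - 1" "Suc i"] i by simp
  have msplit: "m = take (Suc i) m @ [v]"
  proof -
    have "m = take (Suc i) m @ drop (Suc i) m" by simp
    moreover have "drop (Suc i) m = m ! Suc i # drop (Suc (Suc i)) m"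
      using i(2) by (rule Cons_nth_drop_Suc[symmetric])
    moreover have "drop (Suc (Suc i)) m = []" using si i(2) by simp
    ultimately have "m = take (Suc i) m @ [m ! Suc i]" by simp
    then show ?thesis using i by simp
  qed
  have lt: "last (take (Suc i) m) = u" using i last_take_Suc[of i m] by simp
  have tne: "take (Suc i) m \<noteq> []" using i by auto
  have "is_min G (root G) u (take (Suc i) m)" using is_min_prefix[OF wf _ tne, of "root G" v "[v]"] mm msplit lt by simp
  then have mu: "min_s G (root G) u = take (Suc i) m" using is_min_min_s[OF wf] by blast
  have "u \<in> verts G" using ipath_set[OF mp(1)] i by (metis Suc_lessD nth_mem subsetD)
  moreover have "(u, v) \<in> edges G" using ipath_nth[OF mp(1) i(2)] i by simp
  ultimately show ?thesis using mu msplit i unfolding m_def by simp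
qed

lemma S_path_min:
  assumes G: "fingraph_obj G" and p: "ipath (S_obj G) p" and h: "hd p = root G"
  shows "p = min_s G (root G) (last p)"
  using p h
proof (induction p rule: rev_induct)
  case Nil then show ?case by simp
next
  case (snoc x xs)
  have wf: "wf_eograph G" using G unfolding fingraph_obj_def by simp
  show ?case
  proof (cases "xs = []")
    case True
    then have "x = root G" using snoc by simp
    moreover have "root G \<in> verts G" using wf unfolding wf_eograph_def by simp
    ultimately show ?thesis using True min_s_root[OF wf] by simp
  next
    case False
    have "ipath (S_obj G) xs" "(last xs, x) \<in> S_edges G" using snoc.prems False ipath_append[of xs "[x]" "S_obj G"]
      by (auto simp: S_obj_def)
    moreover have "hd xs = root G" using snoc.prems False by simp
    ultimately have "xs = min_s G (root G) (last xs)" "min_s G (root G) x = min_s G (root G) (last xs) @ [x]"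
      using snoc.IH S_edge_D[OF G] by auto
    then show ?thesis by simp
  qed
qed

lemma S_min_path:
  assumes G: "fingraph_obj G" and v: "v \<in> verts G"
  shows "ipath (S_obj G) (min_s G (root G) v)"
proof -
  have wf: "wf_eograph G" using G unfolding fingraph_obj_def by simp
  define m where "m = min_s G (root G) v"
  have mm: "is_min G (root G) v m" unfolding m_def using ms_is_min[OF G v] .
  have mp: "ipath G m" using mm unfolding is_min_def pft by auto
  have "is_path (S_obj G) m" unfolding is_path_def
  proof (intro conjI allI impI)
    show "m \<noteq> []" using mp by auto
    show "set m \<subseteq> verts (S_obj G)" using ipath_set[OF mp] by (simp add: S_obj_def)
  next
    fix k assume k: "Suc k < length m"
    define w where "w = m ! Suc k"
    have "m = take (Suc (Suc k)) m @ drop (Suc (Suc k)) m" by simp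
    moreover have lt: "last (take (Suc (Suc k)) m) = w" unfolding w_def using k last_take_Suc[of "Suc k" m] by simp
    ultimately have "is_min G (root G) w (take (Suc (Suc k)) m)"
      using is_min_prefix[OF wf, of "root G" v "take (Suc (Suc k)) m" "drop (Suc (Suc k)) m"] mm ipath_nonempty[OF mp] by simp
    then have mw: "min_s G (root G) w = take (Suc (Suc k)) m" using is_min_min_s[OF wf] by blast
    have wv: "w \<in> verts G" unfolding w_def using ipath_set[OF mp] k by (metis nth_mem subsetD)
    have "(m ! k, w) \<in> S_edges G" unfolding S_edges_def using wv mw k
      by (auto intro!: exI[of _ k] simp: w_def)
    then show "(m ! k, m ! Suc k) \<in> edges (S_obj G)" unfolding w_def by (simp add: S_obj_def)
  qed
  then show ?thesis unfolding m_def is_path_ipath .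
qed


lemma wf_eographI:
  assumes "finite (verts G)" "edges G \<subseteq> verts G \<times> verts G" "root G \<in> verts G"
    "\<And>u v1 v2. eord G u v1 v2 \<Longrightarrow> u \<in> verts G \<and> (u, v1) \<in> edges G \<and> (u, v2) \<in> edges G"
    "\<And>u v. u \<in> verts G \<Longrightarrow> \<not> eord G u v v"
    "\<And>u a b c. u \<in> verts G \<Longrightarrow> eord G u a b \<Longrightarrow> eord G u b c \<Longrightarrow> eord G u a c"
    "\<And>u a b. u \<in> verts G \<Longrightarrow> (u, a) \<in> edges G \<Longrightarrow> (u, b) \<in> edges G \<Longrightarrow> a \<noteq> b \<Longrightarrow> eord G u a b \<or> eord G u b a"
  shows "wf_eograph G"
  using assms unfolding wf_eograph_def nbhd_def by blast

lemma S_sel: "verts (S_obj G) = verts G" "edges (S_obj G) = S_edges G" "root (S_obj G) = root G"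
  "eord (S_obj G) u a b = (eord G u a b \<and> (u, a) \<in> S_edges G \<and> (u, b) \<in> S_edges G)"
  unfolding S_obj_def by simp_all

lemma S_wf:
  assumes G: "fingraph_obj G"
  shows "wf_eograph (S_obj G)"
proof -
  have wf: "wf_eograph G" using G unfolding fingraph_obj_def by simp
  note D = S_edge_D[OF G]
  show ?thesis
  proof (rule wf_eographI, unfold S_sel)
    show "finite (verts G)" "root G \<in> verts G" using wf unfolding wf_eograph_def by simp_all
    show "S_edges G \<subseteq> verts G \<times> verts G" using D by auto
  next
    fix u v1 v2 assume "eord G u v1 v2 \<and> (u, v1) \<in> S_edges G \<and> (u, v2) \<in> S_edges G"
    then show "u \<in> verts G \<and> (u, v1) \<in> S_edges G \<and> (u, v2) \<in> S_edges G" using wf_eord[OF wf] by blast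
  next
    fix u v assume "u \<in> verts G"
    show "\<not> (eord G u v v \<and> (u, v) \<in> S_edges G \<and> (u, v) \<in> S_edges G)" using wf_irr[OF wf] by blast
  next
    fix u a b c assume "eord G u a b \<and> (u, a) \<in> S_edges G \<and> (u, b) \<in> S_edges G"
      "eord G u b c \<and> (u, b) \<in> S_edges G \<and> (u, c) \<in> S_edges G"
    then show "eord G u a c \<and> (u, a) \<in> S_edges G \<and> (u, c) \<in> S_edges G" using wf_trans[OF wf] by blast
  next
    fix u a b assume "u \<in> verts G" "(u, a) \<in> S_edges G" "(u, b) \<in> S_edges G" "a \<noteq> b"
    then show "eord G u a b \<and> (u, a) \<in> S_edges G \<and> (u, b) \<in> S_edges G \<or>
       eord G u b a \<and> (u, b) \<in> S_edges G \<and> (u, a) \<in> S_edges G"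
      using wf_total[OF wf] D by blast
  qed
qed

lemma part1:
  assumes G: "fingraph_obj G"
  shows "finarb_obj (S_obj G)"
  unfolding finarb_obj_def arborescence_def
proof (intro conjI S_wf[OF G] ballI)
  fix u assume u: "u \<in> verts (S_obj G)"
  then have u': "u \<in> verts G" by (simp add: S_sel)
  show "\<exists>!xs. path_from_to (S_obj G) (root (S_obj G)) u xs"
  proof (rule ex1I)
    show "path_from_to (S_obj G) (root (S_obj G)) u (min_s G (root G) u)"
      unfolding pft S_sel using S_min_path[OF G u'] ms_is_min[OF G u'] unfolding is_min_def pft by auto
  next
    fix xs assume "path_from_to (S_obj G) (root (S_obj G)) u xs"
    then show "xs = min_s G (root G) u" unfolding pft S_sel using S_path_min[OF G] by metis
  qed
qed

lemma part2:
  assumes G: "fingraph_obj G" and H: "fingraph_obj H" and h: "shortlex_hom G H h"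
  shows "graph_hom (S_obj G) (S_obj H) h"
proof -
  have wfG: "wf_eograph G" using G unfolding fingraph_obj_def by simp
  have gh: "graph_hom G H h" using h unfolding shortlex_hom_def by simp
  have rG: "root G \<in> verts G" using wfG unfolding wf_eograph_def by simp
  have hr: "h (root G) = root H" using gh rG unfolding graph_hom_def by blast
  have E: "(h u, h v) \<in> S_edges H" if e: "(u, v) \<in> S_edges G" for u v
  proof -
    obtain i where i: "v \<in> verts G" "Suc i < length (min_s G (root G) v)"
      "min_s G (root G) v ! i = u" "min_s G (root G) v ! Suc i = v"
      using e unfolding S_edges_def by blast
    have "reachable G (root G) v" using G i(1) unfolding fingraph_obj_def connected_graph_def by blast
    then have "min_s H (root H) (h v) = map h (min_s G (root G) v)"
      using h rG i(1) hr unfolding shortlex_hom_def by metis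
    moreover have "h v \<in> verts H" using gh i(1) unfolding graph_hom_def by blast
    ultimately show ?thesis unfolding S_edges_def using i
      by (auto intro!: exI[of _ i])
  qed
  have gh': "(\<forall>u \<in> verts G. h u \<in> verts H)" "(\<forall>u \<in> verts G. h u = root H \<longleftrightarrow> u = root G)"
     "(\<forall>u v1 v2. eord G u v1 v2 \<longrightarrow> eord H (h u) (h v1) (h v2))"
    using gh unfolding graph_hom_def by blast+
  show ?thesis unfolding graph_hom_def S_sel
    using E gh' by blast
qed


lemma ipath_map:
  assumes "\<forall>u \<in> verts A. h u \<in> verts B" "\<forall>u v. (u, v) \<in> edges A \<longrightarrow> (h u, h v) \<in> edges B"
  shows "ipath A p \<Longrightarrow> ipath B (map h p)"
  by (induction p rule: induct_list012) (use assms in auto)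

lemma S_edge_I:
  assumes G: "fingraph_obj G" and v: "v \<in> verts G" and Q: "Q \<noteq> []" and m: "min_s G (root G) v = Q @ [v]"
  shows "(last Q, v) \<in> S_edges G"
  unfolding S_edges_def using v Q m
  by (auto intro!: exI[of _ "length Q - 1"] simp: nth_append last_conv_nth)

lemma arb_edge_min:
  assumes A: "finarb_obj A" and e: "(u, v) \<in> edges A"
  shows "\<exists>P. path_from_to A (root A) u P \<and> min_s A (root A) v = P @ [v]"
proof -
  have wf: "wf_eograph A" using A unfolding finarb_obj_def by simp
  have uv: "u \<in> verts A" "v \<in> verts A" using wf e unfolding wf_eograph_def by auto
  have arb: "\<forall>u \<in> verts A. \<exists>!xs. path_from_to A (root A) u xs" using A unfolding finarb_obj_def arborescence_def by simp
  obtain P where P: "path_from_to A (root A) u P" using arb uv by blast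
  have Pp: "ipath A P" "hd P = root A" "last P = u" using P unfolding pft by auto
  have "ipath A (P @ [v])" using Pp e uv ipath_append[of P "[v]" A] ipath_nonempty[OF Pp(1)] by simp
  then have Pv: "path_from_to A (root A) v (P @ [v])" unfolding pft using Pp ipath_nonempty[OF Pp(1)] by simp
  have uniq: "q = P @ [v]" if "path_from_to A (root A) v q" for q using arb uv(2) Pv that by blast
  have "is_min A (root A) v (P @ [v])" unfolding is_min_def using Pv uniq sl_irrefl by metis
  then show ?thesis using P is_min_min_s[OF wf] by blast
qed

lemma part3a:
  assumes A: "finarb_obj A" and G: "fingraph_obj G" and h: "shortlex_hom A G h"
  shows "graph_hom A (S_obj G) h"
proof -
  have wfA: "wf_eograph A" using A unfolding finarb_obj_def by simp
  have gh: "graph_hom A G h" using h unfolding shortlex_hom_def by simp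
  have rA: "root A \<in> verts A" using wfA unfolding wf_eograph_def by simp
  have hr: "h (root A) = root G" using gh rA unfolding graph_hom_def by blast
  have E: "(h u, h v) \<in> S_edges G" if e: "(u, v) \<in> edges A" for u v
  proof -
    obtain P where P: "path_from_to A (root A) u P" "min_s A (root A) v = P @ [v]" using arb_edge_min[OF A e] by blast
    have v: "v \<in> verts A" using wfA e unfolding wf_eograph_def by auto
    have Pne: "P \<noteq> []" and lP: "last P = u" using P unfolding pft by auto
    have arb: "\<forall>u \<in> verts A. \<exists>!xs. path_from_to A (root A) u xs" using A unfolding finarb_obj_def arborescence_def by simp
    have "reachable A (root A) v" unfolding reachable_def using arb v by blast
    then have "map h (min_s A (root A) v) = min_s G (root G) (h v)"
      using h rA v hr unfolding shortlex_hom_def by metis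
    then have m: "min_s G (root G) (h v) = map h P @ [h v]" using P by simp
    have hv: "h v \<in> verts G" using gh v unfolding graph_hom_def by blast
    have "(last (map h P), h v) \<in> S_edges G" using S_edge_I[OF G hv _ m] Pne by simp
    then show ?thesis using Pne lP by (simp add: last_map)
  qed
  have gh': "(\<forall>u \<in> verts A. h u \<in> verts G)" "(\<forall>u \<in> verts A. h u = root G \<longleftrightarrow> u = root A)"
     "(\<forall>u v1 v2. eord A u v1 v2 \<longrightarrow> eord G (h u) (h v1) (h v2))"
    using gh unfolding graph_hom_def by blast+
  have "eord A u v1 v2 \<Longrightarrow> (u, v1) \<in> edges A \<and> (u, v2) \<in> edges A" for u v1 v2 using wf_eord[OF wfA] by blast
  then show ?thesis unfolding graph_hom_def S_sel
    using E gh' by blast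
qed

lemma part3b:
  assumes A: "finarb_obj A" and G: "fingraph_obj G" and h: "graph_hom A (S_obj G) h"
  shows "shortlex_hom A G h"
proof -
  have wfA: "wf_eograph A" using A unfolding finarb_obj_def by simp
  have wfG: "wf_eograph G" using G unfolding fingraph_obj_def by simp
  have arb: "\<forall>u \<in> verts A. \<exists>!xs. path_from_to A (root A) u xs" using A unfolding finarb_obj_def arborescence_def by simp
  have hS: "\<forall>u \<in> verts A. h u \<in> verts G" "\<forall>u v. (u, v) \<in> edges A \<longrightarrow> (h u, h v) \<in> S_edges G"
     "\<forall>u \<in> verts A. h u = root G \<longleftrightarrow> u = root A"
     "\<forall>u v1 v2. eord A u v1 v2 \<longrightarrow> eord G (h u) (h v1) (h v2)"
    using h unfolding graph_hom_def S_sel by blast+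
  have SE: "(u, v) \<in> S_edges G \<Longrightarrow> (u, v) \<in> edges G" for u v using S_edge_D[OF G] by blast
  have gh: "graph_hom A G h" unfolding graph_hom_def using hS SE by blast
  have rA: "root A \<in> verts A" using wfA unfolding wf_eograph_def by simp
  have hr: "h (root A) = root G" using hS rA by blast
  show ?thesis unfolding shortlex_hom_def
  proof (intro conjI gh ballI impI)
    fix u v assume u: "u \<in> verts A" and v: "v \<in> verts A" and r: "reachable A u v"
    define q where "q = min_s A u v"
    have qq: "ipath A q" "hd q = u" "last q = v" using min_s_is_min[OF wfA r] unfolding q_def is_min_def pft by auto
    obtain P where P: "path_from_to A (root A) u P" using arb u by blast
    have Pp: "ipath A P" "hd P = root A" "last P = u" using P unfolding pft by auto
    have Pne: "P \<noteq> []" and qne: "q \<noteq> []" using Pp qq by auto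
    have ipA: "ipath A (P @ tl q)" using ipath_glue[OF Pp(1) qq(1)] Pp qq by simp
    have "ipath (S_obj G) (map h (P @ tl q))"
      apply (rule ipath_map[of A h "S_obj G"])
      using hS ipA by (auto simp: S_sel)
    moreover have "hd (map h (P @ tl q)) = root G" using Pne Pp hr by (simp add: hd_map)
    ultimately have eq: "map h (P @ tl q) = min_s G (root G) (last (map h (P @ tl q)))"
      using S_path_min[OF G] by blast
    have "last (map h (P @ tl q)) = h (last (P @ tl q))" by (rule last_map) (use Pne in simp)
    then have "last (map h (P @ tl q)) = h v" using last_glue[OF qne _ Pne] Pp qq by simp
    then have eq2: "map h P @ tl (map h q) = min_s G (root G) (h v)" using eq by (simp add: map_tl)
    have hv: "h v \<in> verts G" using hS v by blast
    have im: "is_min G (root G) (h v) (map h P @ tl (map h q))" using ms_is_min[OF G hv] eq2 by simp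
    have iq: "ipath G (map h q)" using ipath_map[of A h G] gh qq unfolding graph_hom_def by blast
    have l: "last (map h P) = hd (map h q)" using Pp qq Pne qne by (simp add: last_map hd_map)
    have "is_min G (hd (map h q)) (h v) (map h q)"
      using is_min_suffix[OF wfG im _ iq l] Pne by simp
    then have "is_min G (h u) (h v) (map h q)" using qq qne by (simp add: hd_map)
    then show "map h (min_s A u v) = min_s G (h u) (h v)" using is_min_min_s[OF wfG] q_def by metis
  qed
qed

theorem theorem6p2:
  shows
    "(\<forall>G :: 'b eograph. fingraph_obj G \<longrightarrow> finarb_obj (S_obj G))
   \<and> (\<forall>(G :: 'b eograph) (H :: 'c eograph) h.
        fingraph_obj G \<longrightarrow> fingraph_obj H \<longrightarrow> shortlex_hom G H h \<longrightarrow>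
        graph_hom (S_obj G) (S_obj H) h)
   \<and> (\<forall>(A :: 'a eograph) (G :: 'b eograph). finarb_obj A \<longrightarrow> fingraph_obj G \<longrightarrow>
        (\<forall>h. shortlex_hom A G h \<longleftrightarrow> graph_hom A (S_obj G) h))"
proof (intro conjI allI impI)
  fix G :: "'b eograph" assume "fingraph_obj G" then show "finarb_obj (S_obj G)" by (rule part1)
next
  fix G :: "'b eograph" and H :: "'c eograph" and h
  assume "fingraph_obj G" "fingraph_obj H" "shortlex_hom G H h"
  then show "graph_hom (S_obj G) (S_obj H) h" by (rule part2)
next
  fix A :: "'a eograph" and G :: "'b eograph" and h
  assume a: "finarb_obj A" "fingraph_obj G"
  show "shortlex_hom A G h \<longleftrightarrow> graph_hom A (S_obj G) h"
  proof
    assume "shortlex_hom A G h" then show "graph_hom A (S_obj G) h" by (rule part3a[OF a])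
  next
    assume "graph_hom A (S_obj G) h" then show "shortlex_hom A G h" by (rule part3b[OF a])
  qed
qed

end
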